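(* Let $U$ be a nonempty finite set, $R$ a relation on $U$, $M(R)$ the relation matroid induced by $R$, and $R(M(R))$ the relation induced by $M(R)$. Then $R(M(R))=R$ if and only if $R$ is an equivalence relation.
   Context: For $x\in U$, $RS_R(x)=\{y\in U:(x,y)\in R\}$. $\mathbf{I}(R)=\{X\subseteq U: \forall x,y\in X,\ x\neq y \Rightarrow RS_R(x)\neq RS_R(y)\}$; this is the family of independent sets of a matroid $M(R)=(U,\mathbf{I}(R))$, called the relation matroid induced by $R$. For a matroid $M$ on $U$ with family of circuits (minimal dependent sets) $\mathbf{C}(M)$, the relation induced by $M$ is $R(M)$ given by $x\,R(M)\,y \iff x=y$ or $\{x,y\}\in\mathbf{C}(M)$. *)

theory Defs
  imports Main
begin

definition RS :: "'a set \<Rightarrow> 'a rel \<Rightarrow> 'a \<Rightarrow> 'a set" where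
  "RS U R x = {y \<in> U. (x, y) \<in> R}"

definition rel_indep :: "'a set \<Rightarrow> 'a rel \<Rightarrow> 'a set set" where
  "rel_indep U R = {X. X \<subseteq> U \<and> (\<forall>x\<in>X. \<forall>y\<in>X. x \<noteq> y \<longrightarrow> RS U R x \<noteq> RS U R y)}"

text \<open>A matroid on U is represented by its family of independent sets.
  Circuits: minimal dependent subsets of U.\<close>
definition circuits :: "'a set \<Rightarrow> 'a set set \<Rightarrow> 'a set set" where
  "circuits U I = {C. C \<subseteq> U \<and> C \<notin> I \<and> (\<forall>D. D \<subset> C \<longrightarrow> D \<in> I)}"

definition matroid_rel :: "'a set \<Rightarrow> 'a set set \<Rightarrow> 'a rel" where
  "matroid_rel U I = {(x, y). x \<in> U \<and> y \<in> U \<and> (x = y \<or> {x, y} \<in> circuits U I)}"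

end

theory Submission
  imports Defs
begin

lemma pair_circ:
  assumes "x \<in> U" "y \<in> U" "x \<noteq> y"
  shows "{x, y} \<in> circuits U (rel_indep U R) \<longleftrightarrow> RS U R x = RS U R y"
proof
  assume "{x, y} \<in> circuits U (rel_indep U R)"
  then have "{x,y} \<notin> rel_indep U R" by (simp add: circuits_def)
  then show "RS U R x = RS U R y" using assms unfolding rel_indep_def by auto
next
  assume h: "RS U R x = RS U R y"
  have "{x,y} \<notin> rel_indep U R" using assms h unfolding rel_indep_def by auto
  moreover have "D \<in> rel_indep U R" if "D \<subset> {x,y}" for D
  proof -
    have "D \<subseteq> {x} \<or> D \<subseteq> {y}" using that by blast
    then show ?thesis using assms unfolding rel_indep_def by auto
  qed
  ultimately show "{x, y} \<in> circuits U (rel_indep U R)" using assms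
    unfolding circuits_def by auto
qed

lemma mr_eq: "matroid_rel U (rel_indep U R) =
   {(x,y). x \<in> U \<and> y \<in> U \<and> (x = y \<or> RS U R x = RS U R y)}"
  unfolding matroid_rel_def using pair_circ by fastforce

theorem mainTheorem17:
  fixes U :: "'a set" and R :: "'a rel"
  assumes "finite U" and "U \<noteq> {}" and "R \<subseteq> U \<times> U"
  shows "matroid_rel U (rel_indep U R) = R \<longleftrightarrow> equiv U R"
proof
  assume h: "matroid_rel U (rel_indep U R) = R"
  let ?S = "{(x,y). x \<in> U \<and> y \<in> U \<and> (x = y \<or> RS U R x = RS U R y)}"
  have "equiv U ?S"
    unfolding equiv_def refl_on_def sym_def trans_def by auto
  then show "equiv U R" using h mr_eq by metis
next
  assume e: "equiv U R"
  have rs: "RS U R x = RS U R y \<longleftrightarrow> (x,y) \<in> R" if "x \<in> U" "y \<in> U" for x y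
  proof
    assume "RS U R x = RS U R y"
    moreover have "y \<in> RS U R y" using e that unfolding equiv_def refl_on_def RS_def by auto
    ultimately show "(x,y) \<in> R" unfolding RS_def by auto
  next
    assume xy: "(x,y) \<in> R"
    show "RS U R x = RS U R y"
      using e xy unfolding RS_def equiv_def sym_def trans_def by blast
  qed
  show "matroid_rel U (rel_indep U R) = R"
    unfolding mr_eq using rs assms(3) e unfolding equiv_def refl_on_def by auto
qed

end
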